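(* Let $n\ge 4$, $d\ge 2$, and $\mathbf h\in\mathbb{R}^{\binom{n+d-1}{d}}$ decomposed as $\mathbf h=(\mathbf h_0,\dots,\mathbf h_d)$. Suppose $\sum_{i=1}^{d-2}N(\mathbf h_i)+N(\mathbf h_d)=0$, $P(\mathbf h_d)=N(\mathbf h_{d-1})=2$, and $J_{n,d}\mathbf h\ge 0$. Then $R(J_{n,d}\mathbf h)\ge 3n-4$.
   Context: For a real vector $\mathbf x$, $P(\mathbf x)$, $N(\mathbf x)$, $R(\mathbf x)$ denote the numbers of positive, negative and nonzero components; inequalities are componentwise. $J_{m,j}$ is the matrix, with respect to the left lexicographic bases of degree-$j$ and degree-$(j+1)$ monomials in $m$ variables, of multiplication by the sum of the variables. If $\mathbf h$ is the coordinate vector of $A(x)=\sum_{j=0}^d x_1^{d-j}A_j(x_2,\dots,x_n)$ ($A_j$ homogeneous of degree $j$), then $\mathbf h_j$ is the coordinate vector of $A_j$ in the left lexicographic basis of degree-$j$ monomials in $x_2,\dots,x_n$. *)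

theory Defs
  imports Complex_Main
begin

text \<open>Monomials of degree d in m variables, indexed 0..m-1 (index 0 is x_1),
  represented by exponent vectors. A coordinate vector w.r.t. the monomial basis
  is represented as a real-valued function on exponent vectors (only values on
  monoms m d matter).\<close>

definition monoms :: "nat \<Rightarrow> nat \<Rightarrow> (nat \<Rightarrow> nat) set" where
  "monoms m d = {\<alpha>. (\<forall>i\<ge>m. \<alpha> i = 0) \<and> (\<Sum>i<m. \<alpha> i) = d}"

definition Pcount :: "'a set \<Rightarrow> ('a \<Rightarrow> real) \<Rightarrow> nat" where
  "Pcount S v = card {x\<in>S. v x > 0}"
definition Ncount :: "'a set \<Rightarrow> ('a \<Rightarrow> real) \<Rightarrow> nat" where
  "Ncount S v = card {x\<in>S. v x < 0}"
definition Rcount :: "'a set \<Rightarrow> ('a \<Rightarrow> real) \<Rightarrow> nat" where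
  "Rcount S v = card {x\<in>S. v x \<noteq> 0}"

text \<open>J_{m,d}: multiplication by x_1+...+x_m, mapping degree-d coefficient vectors
  to degree-(d+1) coefficient vectors: (J h)_\<beta> = sum over i with \<beta>_i>0 of h_{\<beta>-e_i}.\<close>
definition Jmat :: "nat \<Rightarrow> nat \<Rightarrow> ((nat \<Rightarrow> nat) \<Rightarrow> real) \<Rightarrow> (nat \<Rightarrow> nat) \<Rightarrow> real" where
  "Jmat m d h \<beta> = (\<Sum>i\<in>{i. i < m \<and> 0 < \<beta> i}. h (\<beta>(i := \<beta> i - 1)))"

text \<open>h_j: coordinate vector of A_j(x_2,...,x_n), where A = sum_j x_1^(d-j) A_j;
  monomials of A_j are indexed as monomials in n-1 variables (x_2 \<mapsto> index 0).\<close>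
definition hpart :: "nat \<Rightarrow> ((nat \<Rightarrow> nat) \<Rightarrow> real) \<Rightarrow> nat \<Rightarrow> (nat \<Rightarrow> nat) \<Rightarrow> real" where
  "hpart d h j \<gamma> = h (\<lambda>i. if i = 0 then d - j else \<gamma> (i - 1))"

end

theory Submission imports Defs begin

lemma bounded_funs_finite: "finite {\<alpha>::nat\<Rightarrow>nat. (\<forall>i\<ge>m. \<alpha> i = 0) \<and> (\<forall>i. \<alpha> i \<le> d)}"
proof (induction m)
  case 0
  have "{\<alpha>::nat\<Rightarrow>nat. (\<forall>i\<ge>0. \<alpha> i = 0) \<and> (\<forall>i. \<alpha> i \<le> d)} \<subseteq> {\<lambda>_. 0}" by (auto simp: fun_eq_iff)
  then show ?case by (rule finite_subset) simp
next
  case (Suc m)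
  let ?S = "{\<alpha>::nat\<Rightarrow>nat. (\<forall>i\<ge>m. \<alpha> i = 0) \<and> (\<forall>i. \<alpha> i \<le> d)}"
  have "{\<alpha>::nat\<Rightarrow>nat. (\<forall>i\<ge>Suc m. \<alpha> i = 0) \<and> (\<forall>i. \<alpha> i \<le> d)}
        \<subseteq> (\<lambda>(f,k). f(m:=k)) ` (?S \<times> {..d})"
  proof
    fix \<alpha> :: "nat\<Rightarrow>nat" assume a: "\<alpha> \<in> {\<alpha>. (\<forall>i\<ge>Suc m. \<alpha> i = 0) \<and> (\<forall>i. \<alpha> i \<le> d)}"
    have "\<alpha>(m:=0) \<in> ?S" using a by (simp add: le_Suc_eq)
    moreover have "\<alpha> m \<in> {..d}" using a by auto
    ultimately have "(\<alpha>(m:=0), \<alpha> m) \<in> ?S \<times> {..d}" by blast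
    moreover have "\<alpha> = (\<lambda>(f,k). f(m:=k)) (\<alpha>(m:=0), \<alpha> m)" by simp
    ultimately show "\<alpha> \<in> (\<lambda>(f,k). f(m:=k)) ` (?S \<times> {..d})" by blast
  qed
  moreover have "finite ((\<lambda>(f,k). f(m:=k)) ` (?S \<times> {..d}))" using Suc.IH by simp
  ultimately show ?case by (rule finite_subset)
qed

lemma monoms_finite: "finite (monoms m d)"
proof -
  have "monoms m d \<subseteq> {\<alpha>::nat\<Rightarrow>nat. (\<forall>i\<ge>m. \<alpha> i = 0) \<and> (\<forall>i. \<alpha> i \<le> d)}"
  proof
    fix \<alpha> assume a: "\<alpha> \<in> monoms m d"
    have "\<alpha> i \<le> d" for i
    proof (cases "i < m")
      case True
      then have "\<alpha> i \<le> (\<Sum>k<m. \<alpha> k)" by (intro member_le_sum) auto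
      then show ?thesis using a by (simp add: monoms_def)
    next
      case False then show ?thesis using a by (simp add: monoms_def)
    qed
    then show "\<alpha> \<in> {\<alpha>::nat\<Rightarrow>nat. (\<forall>i\<ge>m. \<alpha> i = 0) \<and> (\<forall>i. \<alpha> i \<le> d)}"
      using a by (simp add: monoms_def)
  qed
  then show ?thesis using bounded_funs_finite finite_subset by blast
qed

lemma sum_upd: "i < (n::nat) \<Longrightarrow> (\<Sum>k<n. (f(i:=x)) k) + f i = (\<Sum>k<n. f k) + (x::nat)"
proof -
  assume i: "i < n"
  have "(\<Sum>k<n. (f(i:=x)) k) = (f(i:=x)) i + (\<Sum>k\<in>{..<n}-{i}. (f(i:=x)) k)"
    by (rule sum.remove) (use i in auto)
  moreover have "(\<Sum>k<n. f k) = f i + (\<Sum>k\<in>{..<n}-{i}. f k)"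
    using i sum.remove[of "{..<n}" i f] by simp
  moreover have "(\<Sum>k\<in>{..<n}-{i}. (f(i:=x)) k) = (\<Sum>k\<in>{..<n}-{i}. f k)"
    by (rule sum.cong) auto
  ultimately show ?thesis by simp
qed

lemma upd_mem_down: "\<beta> \<in> monoms n (Suc d) \<Longrightarrow> k < n \<Longrightarrow> 0 < \<beta> k \<Longrightarrow> \<beta>(k := \<beta> k - 1) \<in> monoms n d"
  using sum_upd[of k n \<beta> "\<beta> k - 1"] by (auto simp: monoms_def)

lemma upd_mem_up: "\<alpha> \<in> monoms n d \<Longrightarrow> i < n \<Longrightarrow> \<alpha>(i := Suc (\<alpha> i)) \<in> monoms n (Suc d)"
  using sum_upd[of i n \<alpha> "Suc (\<alpha> i)"] by (auto simp: monoms_def)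

lemma Jpos:
  assumes "i < n" "0 < \<beta> i" "0 < h (\<beta>(i := \<beta> i - 1))"
    "\<And>k. k < n \<Longrightarrow> 0 < \<beta> k \<Longrightarrow> k \<noteq> i \<Longrightarrow> 0 \<le> h (\<beta>(k := \<beta> k - 1))"
  shows "0 < Jmat n d h \<beta>"
proof -
  let ?K = "{i. i < n \<and> 0 < \<beta> i}"
  have fin: "finite ?K" by auto
  have "Jmat n d h \<beta> = h (\<beta>(i := \<beta> i - 1)) + (\<Sum>k\<in>?K-{i}. h (\<beta>(k := \<beta> k - 1)))"
    unfolding Jmat_def using assms(1,2) fin by (subst sum.remove[of _ i]) auto
  moreover have "0 \<le> (\<Sum>k\<in>?K-{i}. h (\<beta>(k := \<beta> k - 1)))"
    using assms(4) by (intro sum_nonneg) auto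
  ultimately show ?thesis using assms(3) by linarith
qed

definition emb :: "nat \<Rightarrow> (nat \<Rightarrow> nat) \<Rightarrow> nat \<Rightarrow> nat" where
  "emb k \<gamma> = (\<lambda>i. if i = 0 then k else \<gamma> (i - 1))"

lemma hpart_emb: "hpart d h j \<gamma> = h (emb (d - j) \<gamma>)"
  by (simp add: hpart_def emb_def)

lemma layer_card:
  assumes "j \<le> d" "0 < n"
  shows "card {\<gamma> \<in> monoms (n-1) j. P (h (emb (d-j) \<gamma>))} = card {\<alpha> \<in> monoms n d. \<alpha> 0 = d - j \<and> P (h \<alpha>)}"
proof (rule bij_betw_same_card[of "emb (d-j)"], rule bij_betw_byWitness[where f' = "\<lambda>\<alpha> i. \<alpha> (Suc i)"])
  obtain n' where n': "n = Suc n'" using assms(2) by (cases n) auto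
  have sumemb: "(\<Sum>i<n. emb k \<gamma> i) = k + (\<Sum>i<n'. \<gamma> i)" for k \<gamma>
    unfolding n' by (subst sum.lessThan_Suc_shift) (simp add: emb_def)
  have sumsh: "(\<Sum>i<n. \<alpha> i) = \<alpha> 0 + (\<Sum>i<n'. \<alpha> (Suc i))" for \<alpha> :: "nat \<Rightarrow> nat"
    unfolding n' by (subst sum.lessThan_Suc_shift) simp
  show "\<forall>a\<in>{\<gamma> \<in> monoms (n-1) j. P (h (emb (d-j) \<gamma>))}. (\<lambda>\<alpha> i. \<alpha> (Suc i)) (emb (d-j) a) = a"
    by (auto simp: emb_def)
  show "\<forall>a'\<in>{\<alpha> \<in> monoms n d. \<alpha> 0 = d - j \<and> P (h \<alpha>)}. emb (d-j) ((\<lambda>\<alpha> i. \<alpha> (Suc i)) a') = a'"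
  proof
    fix a' :: "nat\<Rightarrow>nat" assume "a' \<in> {\<alpha> \<in> monoms n d. \<alpha> 0 = d - j \<and> P (h \<alpha>)}"
    then show "emb (d-j) ((\<lambda>\<alpha> i. \<alpha> (Suc i)) a') = a'"
      by (auto simp: emb_def fun_eq_iff)
  qed
  show "emb (d-j) ` {\<gamma> \<in> monoms (n-1) j. P (h (emb (d-j) \<gamma>))} \<subseteq> {\<alpha> \<in> monoms n d. \<alpha> 0 = d - j \<and> P (h \<alpha>)}"
  proof
    fix x assume "x \<in> emb (d-j) ` {\<gamma> \<in> monoms (n-1) j. P (h (emb (d-j) \<gamma>))}"
    then obtain \<gamma> where g: "\<gamma> \<in> monoms (n-1) j" "P (h (emb (d-j) \<gamma>))" and x: "x = emb (d-j) \<gamma>" by auto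
    have "\<forall>i\<ge>n. x i = 0" using g(1) unfolding x by (auto simp: emb_def monoms_def n')
    moreover have "(\<Sum>i<n. x i) = d" using g(1) assms(1) unfolding x sumemb by (simp add: monoms_def n')
    ultimately show "x \<in> {\<alpha> \<in> monoms n d. \<alpha> 0 = d - j \<and> P (h \<alpha>)}"
      using g x by (simp add: monoms_def emb_def)
  qed
  show "(\<lambda>\<alpha> i. \<alpha> (Suc i)) ` {\<alpha> \<in> monoms n d. \<alpha> 0 = d - j \<and> P (h \<alpha>)} \<subseteq> {\<gamma> \<in> monoms (n-1) j. P (h (emb (d-j) \<gamma>))}"
  proof
    fix x assume "x \<in> (\<lambda>\<alpha> i. \<alpha> (Suc i)) ` {\<alpha> \<in> monoms n d. \<alpha> 0 = d - j \<and> P (h \<alpha>)}"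
    then obtain \<alpha> where a: "\<alpha> \<in> monoms n d" "\<alpha> 0 = d - j" "P (h \<alpha>)" and x: "x = (\<lambda>i. \<alpha> (Suc i))" by auto
    have e: "emb (d-j) x = \<alpha>" using a(2) unfolding x
      by (auto simp: emb_def fun_eq_iff)
    have "\<forall>i\<ge>n-1. x i = 0" using a(1) unfolding x by (auto simp: monoms_def n')
    moreover have "(\<Sum>i<n-1. x i) = j" using a(1,2) assms(1) sumsh[of \<alpha>] unfolding x by (simp add: monoms_def n')
    ultimately show "x \<in> {\<gamma> \<in> monoms (n-1) j. P (h (emb (d-j) \<gamma>))}"
      using a e by (simp add: monoms_def)
  qed
qed


lemma inj_up: "inj_on (\<lambda>i. m(i := Suc (m i))) S"
proof (rule inj_onI)
  fix i j assume "m(i := Suc (m i)) = m(j := Suc (m j))"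
  then have "(m(i := Suc (m i))) i = (m(j := Suc (m j))) i" by simp
  then show "i = j" by (auto split: if_splits)
qed

lemma coord_le_sum: "\<alpha> \<in> monoms n d \<Longrightarrow> i < n \<Longrightarrow> \<alpha> i \<le> d"
  unfolding monoms_def using member_le_sum[of i "{..<n}" \<alpha>] by auto

lemma two_le_sum: "\<alpha> \<in> monoms n d \<Longrightarrow> i < n \<Longrightarrow> i \<noteq> 0 \<Longrightarrow> \<alpha> 0 + \<alpha> i \<le> d"
proof -
  assume a: "\<alpha> \<in> monoms n d" "i < n" "i \<noteq> 0"
  have "sum \<alpha> {0, i} \<le> sum \<alpha> {..<n}" using a by (intro sum_mono2) auto
  then show ?thesis using a by (simp add: monoms_def)
qed

theorem proposition5p2:
  fixes n d :: nat and h :: "(nat \<Rightarrow> nat) \<Rightarrow> real"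
  assumes "n \<ge> 4" and "d \<ge> 2"
    and "(\<Sum>i\<in>{1..d-2}. Ncount (monoms (n-1) i) (hpart d h i))
           + Ncount (monoms (n-1) d) (hpart d h d) = 0"
    and "Pcount (monoms (n-1) d) (hpart d h d) = 2"
    and "Ncount (monoms (n-1) (d-1)) (hpart d h (d-1)) = 2"
    and "\<forall>\<beta>\<in>monoms n (d+1). Jmat n d h \<beta> \<ge> 0"
  shows "Rcount (monoms n (d+1)) (Jmat n d h) \<ge> 3*n - 4"
proof -
  define J where "J = Jmat n d h"
  have n0: "0 < n" using assms(1) by simp
  have Jnn: "0 \<le> J \<beta>" if "\<beta> \<in> monoms n (Suc d)" for \<beta> using assms(6) that by (simp add: J_def)
  have finS: "finite {\<alpha> \<in> monoms n d. P \<alpha>}" for P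
    by (rule finite_subset[OF _ monoms_finite[of n d]]) auto
  have Ncnt: "Ncount (monoms (n-1) j) (hpart d h j) = card {\<alpha> \<in> monoms n d. \<alpha> 0 = d - j \<and> h \<alpha> < 0}"
    if "j \<le> d" for j
    unfolding Ncount_def hpart_emb using layer_card[OF that n0, where P = "\<lambda>x. x < 0" and h = h] by simp
  have Pcnt: "Pcount (monoms (n-1) j) (hpart d h j) = card {\<alpha> \<in> monoms n d. \<alpha> 0 = d - j \<and> 0 < h \<alpha>}"
    if "j \<le> d" for j
    unfolding Pcount_def hpart_emb using layer_card[OF that n0, where P = "\<lambda>x. 0 < x" and h = h] by simp
  have h3: "\<forall>i\<in>{1..d-2}. Ncount (monoms (n-1) i) (hpart d h i) = 0"
    and h3': "Ncount (monoms (n-1) d) (hpart d h d) = 0" using assms(3) by simp_all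
  have lay_empty: "{\<alpha> \<in> monoms n d. \<alpha> 0 = d - j \<and> h \<alpha> < 0} = {}" if "j \<in> {1..d-2} \<or> j = d" for j
  proof -
    have jd: "j \<le> d" using that by auto
    have "Ncount (monoms (n-1) j) (hpart d h j) = 0" using that h3 h3' by auto
    then have "card {\<alpha> \<in> monoms n d. \<alpha> 0 = d - j \<and> h \<alpha> < 0} = 0" using Ncnt[OF jd] by simp
    then show ?thesis using finS by simp
  qed
  have nonneg: "0 \<le> h \<alpha>" if a: "\<alpha> \<in> monoms n d" "\<alpha> 0 \<noteq> 1" for \<alpha>
  proof -
    have le: "\<alpha> 0 \<le> d" using coord_le_sum[OF a(1) n0] .
    consider "\<alpha> 0 = 0" | "\<alpha> 0 = d" | "2 \<le> \<alpha> 0 \<and> \<alpha> 0 < d" using le a(2) by linarith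
    then show ?thesis
    proof cases
      case 1
      then show ?thesis using lay_empty[of d] a(1) by auto
    next
      case 2
      define \<beta> where "\<beta> = (\<lambda>i::nat. if i = 0 then Suc d else 0)"
      have "\<forall>i\<ge>n. \<beta> i = 0" using n0 by (simp add: \<beta>_def)
      moreover have "(\<Sum>i<n. \<beta> i) = Suc d" using n0 unfolding \<beta>_def by (simp add: sum.delta)
      ultimately have \<beta>m: "\<beta> \<in> monoms n (Suc d)" by (simp add: monoms_def)
      have K: "{i. i < n \<and> 0 < \<beta> i} = {0}" using n0 by (auto simp: \<beta>_def)
      have "\<beta>(0 := \<beta> 0 - 1) = \<alpha>"
      proof (rule ext)
        fix i show "(\<beta>(0 := \<beta> 0 - 1)) i = \<alpha> i"
        proof (cases "i = 0")
          case True then show ?thesis using 2 by (simp add: \<beta>_def)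
        next
          case False
          show ?thesis
          proof (cases "i < n")
            case True
            then have "\<alpha> 0 + \<alpha> i \<le> d" using two_le_sum[OF a(1) True False] by simp
            then show ?thesis using 2 False by (simp add: \<beta>_def)
          next
            case False
            then show ?thesis using a(1) \<open>i \<noteq> 0\<close> by (simp add: \<beta>_def monoms_def)
          qed
        qed
      qed
      then have "J \<beta> = h \<alpha>" unfolding J_def Jmat_def K by simp
      then show ?thesis using Jnn[OF \<beta>m] by simp
    next
      case 3
      then have "d - \<alpha> 0 \<in> {1..d-2}" by auto
      then show ?thesis using lay_empty[of "d - \<alpha> 0"] a(1) 3 by auto
    qed
  qed
  have "card {\<alpha> \<in> monoms n d. \<alpha> 0 = 0 \<and> 0 < h \<alpha>} = 2" using assms(4) Pcnt[of d] by simp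
  then obtain m1 m2 where M: "{\<alpha> \<in> monoms n d. \<alpha> 0 = 0 \<and> 0 < h \<alpha>} = {m1, m2}" "m1 \<noteq> m2"
    by (auto simp: card_2_iff)
  have "m1 \<in> {\<alpha> \<in> monoms n d. \<alpha> 0 = 0 \<and> 0 < h \<alpha>}" "m2 \<in> {\<alpha> \<in> monoms n d. \<alpha> 0 = 0 \<and> 0 < h \<alpha>}"
    using M(1) by simp_all
  then have m1: "m1 \<in> monoms n d" "m1 0 = 0" "0 < h m1" and m2: "m2 \<in> monoms n d" "m2 0 = 0" "0 < h m2"
    by simp_all
  have dd: "d - (d - 1) = 1" using assms(2) by simp
  have "card {\<alpha> \<in> monoms n d. \<alpha> 0 = 1 \<and> h \<alpha> < 0} = 2" using assms(5) Ncnt[of "d-1"] dd by simp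
  then obtain p q where PQ: "{\<alpha> \<in> monoms n d. \<alpha> 0 = 1 \<and> h \<alpha> < 0} = {p, q}"
    by (auto simp: card_2_iff)
  have "p \<in> {\<alpha> \<in> monoms n d. \<alpha> 0 = 1 \<and> h \<alpha> < 0}" using PQ by simp
  then have pm: "p \<in> monoms n d" "p 0 = 1" "h p < 0" by simp_all
  have l1: "0 \<le> h \<alpha>" if "\<alpha> \<in> monoms n d" "\<alpha> 0 = 1" "\<alpha> \<notin> {p, q}" for \<alpha>
  proof (rule ccontr)
    assume "\<not> 0 \<le> h \<alpha>"
    then have "\<alpha> \<in> {\<alpha> \<in> monoms n d. \<alpha> 0 = 1 \<and> h \<alpha> < 0}" using that by simp
    then have "\<alpha> \<in> {p, q}" by (simp only: PQ)
    then show False using that(3) by simp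
  qed
  define Z where "Z a = {\<beta> \<in> monoms n (Suc d). \<beta> 0 = a \<and> J \<beta> \<noteq> 0}" for a
  have finZ: "finite (Z a)" for a
    unfolding Z_def by (rule finite_subset[OF _ monoms_finite[of n "Suc d"]]) auto

  have inZ0: "m(i := Suc (m i)) \<in> Z 0" if mm: "m = m1 \<or> m = m2" and i: "1 \<le> i" "i < n" for m i
  proof -
    have m: "m \<in> monoms n d" "m 0 = 0" "0 < h m" using mm m1 m2 by auto
    let ?x = "m(i := Suc (m i))"
    have xm: "?x \<in> monoms n (Suc d)" using upd_mem_up[OF m(1) i(2)] .
    have x0: "?x 0 = 0" using m(2) i(1) by simp
    have "0 < J ?x" unfolding J_def
    proof (rule Jpos[of i])
      show "i < n" by fact
      show "0 < ?x i" by simp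
      show "0 < h (?x(i := ?x i - 1))" using m(3) by simp
      fix k assume k: "k < n" "0 < ?x k" "k \<noteq> i"
      have "?x(k := ?x k - 1) \<in> monoms n d" by (rule upd_mem_down[OF xm k(1,2)])
      moreover have "k \<noteq> 0"
      proof
        assume "k = 0"
        then have "0 < ?x 0" using k(2) by metis
        then show False using x0 by (metis less_irrefl)
      qed
      then have "(?x(k := ?x k - 1)) 0 \<noteq> 1" using x0 by simp
      ultimately show "0 \<le> h (?x(k := ?x k - 1))" by (rule nonneg)
    qed
    then show ?thesis using xm x0 by (simp add: Z_def)
  qed
  define A1 where "A1 = (\<lambda>i. m1(i := Suc (m1 i))) ` {1..<n}"
  define A2 where "A2 = (\<lambda>i. m2(i := Suc (m2 i))) ` {1..<n}"
  have cA1: "card A1 = n - 1" unfolding A1_def by (subst card_image[OF inj_up]) simp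
  have cA2: "card A2 = n - 1" unfolding A2_def by (subst card_image[OF inj_up]) simp
  have "\<forall>x\<in>A1\<inter>A2. \<forall>y\<in>A1\<inter>A2. x = y"
  proof (intro ballI)
    fix x y assume x: "x \<in> A1 \<inter> A2" and y: "y \<in> A1 \<inter> A2"
    obtain i j where xi: "x = m1(i := Suc (m1 i))" and xj: "x = m2(j := Suc (m2 j))"
      using x unfolding A1_def A2_def by blast
    obtain k l where yk: "y = m1(k := Suc (m1 k))" and yl: "y = m2(l := Suc (m2 l))"
      using y unfolding A1_def A2_def by blast
    have ij: "i \<noteq> j"
    proof
      assume "i = j"
      have "m1 c = m2 c" for c
      proof -
        have "x c = x c" by simp
        then have "(m1(i := Suc (m1 i))) c = (m2(i := Suc (m2 i))) c" using xi xj \<open>i = j\<close> by simp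
        then show ?thesis by (cases "c = i") auto
      qed
      then show False using M(2) by auto
    qed
    have "i = k"
    proof (rule ccontr)
      assume ik: "i \<noteq> k"
      have "x i = x i" by simp
      then have e1: "Suc (m1 i) = m2 i" using xi xj ij by (metis fun_upd_apply)
      have "y i = y i" by simp
      then have e2: "m1 i = (m2(l := Suc (m2 l))) i" using yk yl ik by (metis fun_upd_apply)
      have "m2 i \<le> (m2(l := Suc (m2 l))) i" by simp
      then show False using e1 e2 by simp
    qed
    then show "x = y" using xi yk by simp
  qed
  then have cI: "card (A1 \<inter> A2) \<le> 1"
    using card_le_Suc0_iff_eq[of "A1 \<inter> A2"] unfolding A1_def by auto
  have "card A1 + card A2 = card (A1 \<union> A2) + card (A1 \<inter> A2)"
    by (rule card_Un_Int) (auto simp: A1_def A2_def)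
  then have cU: "2 * n - 3 \<le> card (A1 \<union> A2)" using cA1 cA2 cI n0 by linarith
  have "A1 \<union> A2 \<subseteq> Z 0" unfolding A1_def A2_def using inZ0 by auto
  then have cZ0: "2 * n - 3 \<le> card (Z 0)" using card_mono[OF finZ] cU by (meson le_trans)

  have Z1: "Z 1 \<noteq> {}"
  proof
    assume Z1e: "Z 1 = {}"
    have J1: "J \<beta> = 0" if "\<beta> \<in> monoms n (Suc d)" "\<beta> 0 = 1" for \<beta>
    proof (rule ccontr)
      assume "J \<beta> \<noteq> 0"
      then have "\<beta> \<in> Z 1" using that by (simp add: Z_def)
      then show False using Z1e by simp
    qed
    define T where "T = {\<alpha> \<in> monoms n d. \<alpha> 0 = 1 \<and> h \<alpha> \<noteq> 0}"
    have finT: "finite T" unfolding T_def by (rule finS)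
    have pT: "p \<in> T" using pm by (simp add: T_def)
    define M where "M j = Max ((\<lambda>\<alpha>. \<alpha> j) ` T)" for j
    have Mge: "\<alpha> j \<le> M j" if "\<alpha> \<in> T" for \<alpha> j
      unfolding M_def using finT that by (intro Max_ge) auto
    have key: "\<exists>\<gamma>\<in>{m1,m2}. M j < \<gamma> j \<and> (\<forall>k. k \<noteq> j \<and> k \<noteq> 0 \<longrightarrow> \<gamma> k \<le> M k)"
      if j: "1 \<le> j" "j < n" for j
    proof -
      have "M j \<in> (\<lambda>\<alpha>. \<alpha> j) ` T" unfolding M_def using finT pT by (intro Max_in) auto
      then obtain \<alpha> where \<alpha>: "\<alpha> \<in> T" "\<alpha> j = M j" by auto
      have \<alpha>m: "\<alpha> \<in> monoms n d" "\<alpha> 0 = 1" "h \<alpha> \<noteq> 0" using \<alpha>(1) by (auto simp: T_def)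
      define \<beta> where "\<beta> = \<alpha>(j := Suc (\<alpha> j))"
      have \<beta>m: "\<beta> \<in> monoms n (Suc d)" unfolding \<beta>_def by (rule upd_mem_up[OF \<alpha>m(1) j(2)])
      have \<beta>0: "\<beta> 0 = 1" using j \<alpha>m by (simp add: \<beta>_def)
      have \<beta>j: "\<beta> j = Suc (M j)" using \<alpha>(2) by (simp add: \<beta>_def)
      define K where "K = {i. i < n \<and> 0 < \<beta> i}"
      define f where "f k = h (\<beta>(k := \<beta> k - 1))" for k
      have finK: "finite K" by (simp add: K_def)
      have 0: "0 \<in> K" using n0 \<beta>0 by (simp add: K_def)
      have jK: "j \<in> K - {0}" using j \<beta>j by (simp add: K_def)
      have "J \<beta> = sum f K" by (simp add: J_def Jmat_def K_def f_def)
      also have "\<dots> = f 0 + sum f (K - {0})" using finK 0 by (rule sum.remove)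
      also have "sum f (K - {0}) = f j + sum f (K - {0} - {j})" using finK jK by (intro sum.remove) auto
      also have "sum f (K - {0} - {j}) = 0"
      proof (rule sum.neutral, intro ballI)
        fix k assume "k \<in> K - {0} - {j}"
        then have k: "k < n" "0 < \<beta> k" "k \<noteq> 0" "k \<noteq> j" by (auto simp: K_def)
        have mem: "\<beta>(k := \<beta> k - 1) \<in> monoms n d" by (rule upd_mem_down[OF \<beta>m k(1,2)])
        show "f k = 0"
        proof (rule ccontr)
          assume "f k \<noteq> 0"
          then have "\<beta>(k := \<beta> k - 1) \<in> T" using mem k \<beta>0 by (simp add: T_def f_def)
          then have "(\<beta>(k := \<beta> k - 1)) j \<le> M j" by (rule Mge)
          moreover have "(\<beta>(k := \<beta> k - 1)) j = Suc (M j)" using k \<beta>j by simp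
          ultimately show False by simp
        qed
      qed
      finally have "J \<beta> = f 0 + f j" by simp
      moreover have "J \<beta> = 0" using J1[OF \<beta>m \<beta>0] .
      moreover have "f j = h \<alpha>" by (simp add: f_def \<beta>_def)
      ultimately have f0: "f 0 \<noteq> 0" using \<alpha>m(3) by linarith
      define \<gamma> where "\<gamma> = \<beta>(0 := \<beta> 0 - 1)"
      have \<gamma>m: "\<gamma> \<in> monoms n d" unfolding \<gamma>_def by (rule upd_mem_down[OF \<beta>m n0]) (simp add: \<beta>0)
      have \<gamma>0: "\<gamma> 0 = 0" using \<beta>0 by (simp add: \<gamma>_def)
      have "0 \<le> h \<gamma>" using nonneg[OF \<gamma>m] \<gamma>0 by simp
      moreover have "h \<gamma> \<noteq> 0" using f0 by (simp add: f_def \<gamma>_def)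
      ultimately have "0 < h \<gamma>" by simp
      then have "\<gamma> \<in> {\<alpha> \<in> monoms n d. \<alpha> 0 = 0 \<and> 0 < h \<alpha>}" using \<gamma>m \<gamma>0 by simp
      then have "\<gamma> \<in> {m1, m2}" by (simp only: M(1))
      moreover have "M j < \<gamma> j" using \<beta>j j by (simp add: \<gamma>_def)
      moreover have "\<forall>k. k \<noteq> j \<and> k \<noteq> 0 \<longrightarrow> \<gamma> k \<le> M k"
        using Mge[OF \<alpha>(1)] by (simp add: \<gamma>_def \<beta>_def)
      ultimately show ?thesis by blast
    qed
    obtain g1 where g1: "g1 \<in> {m1,m2}" "M 1 < g1 1" "\<forall>k. k \<noteq> 1 \<and> k \<noteq> 0 \<longrightarrow> g1 k \<le> M k"
      using key[of 1] assms(1) by auto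
    obtain g2 where g2: "g2 \<in> {m1,m2}" "M 2 < g2 2" "\<forall>k. k \<noteq> 2 \<and> k \<noteq> 0 \<longrightarrow> g2 k \<le> M k"
      using key[of 2] assms(1) by auto
    obtain g3 where g3: "g3 \<in> {m1,m2}" "M 3 < g3 3" "\<forall>k. k \<noteq> 3 \<and> k \<noteq> 0 \<longrightarrow> g3 k \<le> M k"
      using key[of 3] assms(1) by auto
    have "g2 1 \<le> M 1" "g3 1 \<le> M 1" "g3 2 \<le> M 2" using g2(3) g3(3) by auto
    then have "g1 \<noteq> g2" "g1 \<noteq> g3" "g2 \<noteq> g3" using g1(2) g2(2) by auto
    then show False using g1(1) g2(1) g3(1) by auto
  qed
  obtain r where r: "r \<in> monoms n d" "r 0 = 2" "0 < h r"
  proof -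
    define \<beta> where "\<beta> = p(0 := Suc (p 0))"
    have \<beta>m: "\<beta> \<in> monoms n (Suc d)" unfolding \<beta>_def by (rule upd_mem_up[OF pm(1) n0])
    have \<beta>0: "\<beta> 0 = 2" using pm(2) by (simp add: \<beta>_def)
    define K where "K = {i. i < n \<and> 0 < \<beta> i}"
    define f where "f k = h (\<beta>(k := \<beta> k - 1))" for k
    have finK: "finite K" by (simp add: K_def)
    have 0: "0 \<in> K" using n0 \<beta>0 by (simp add: K_def)
    have "J \<beta> = sum f K" by (simp add: J_def Jmat_def K_def f_def)
    also have "\<dots> = f 0 + sum f (K - {0})" using finK 0 by (rule sum.remove)
    finally have Jb: "J \<beta> = f 0 + sum f (K - {0})" .
    have f0: "f 0 = h p" by (simp add: f_def \<beta>_def)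
    have "\<exists>k\<in>K - {0}. 0 < f k"
    proof (rule ccontr)
      assume "\<not> (\<exists>k\<in>K - {0}. 0 < f k)"
      then have "sum f (K - {0}) \<le> 0" by (intro sum_nonpos) (auto simp: not_less)
      then show False using Jb f0 pm(3) Jnn[OF \<beta>m] by linarith
    qed
    then obtain k where k: "k \<in> K - {0}" "0 < f k" by blast
    have kk: "k < n" "0 < \<beta> k" "k \<noteq> 0" using k(1) by (auto simp: K_def)
    have "\<beta>(k := \<beta> k - 1) \<in> monoms n d" by (rule upd_mem_down[OF \<beta>m kk(1,2)])
    moreover have "(\<beta>(k := \<beta> k - 1)) 0 = 2" using kk(3) \<beta>0 by simp
    moreover have "0 < h (\<beta>(k := \<beta> k - 1))" using k(2) by (simp add: f_def)
    ultimately show ?thesis by (rule that)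
  qed
  define A where "A = (\<lambda>i. r(i := Suc (r i))) ` {1..<n}"
  define B where "B = {x \<in> A. x(0 := 1) \<in> {p, q}}"
  have cA: "card A = n - 1" unfolding A_def by (subst card_image[OF inj_up]) simp
  have A0: "\<forall>x\<in>A. x 0 = 2" using r(2) by (auto simp: A_def)
  have finA: "finite A" by (simp add: A_def)
  have "card B \<le> card {p, q}"
  proof (rule card_inj_on_le[of "\<lambda>x. x(0 := 1)"])
    show "inj_on (\<lambda>x. x(0 := 1)) B"
    proof (rule inj_onI)
      fix x y assume x: "x \<in> B" and y: "y \<in> B" and eq: "x(0 := 1) = y(0 := 1)"
      show "x = y"
      proof (rule ext)
        fix c show "x c = y c"
        proof (cases "c = 0")
          case True
          have "x \<in> A" "y \<in> A" using x y by (auto simp: B_def)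
          then have "x 0 = 2" "y 0 = 2" using A0 by blast+
          then show ?thesis using True by simp
        next
          case False then show ?thesis using fun_cong[OF eq, of c] by simp
        qed
      qed
    qed
    show "(\<lambda>x. x(0 := 1)) ` B \<subseteq> {p, q}" by (auto simp: B_def)
    show "finite {p, q}" by simp
  qed
  moreover have "card {p, q} \<le> 2" by (cases "p = q") auto
  ultimately have cB: "card B \<le> 2" by simp
  have "A - B \<subseteq> Z 2"
  proof
    fix x assume xAB: "x \<in> A - B"
    then obtain i where i: "1 \<le> i" "i < n" and xi: "x = r(i := Suc (r i))" by (auto simp: A_def)
    have npq: "x(0 := 1) \<notin> {p, q}" using xAB by (simp add: B_def)
    have xm: "x \<in> monoms n (Suc d)" unfolding xi by (rule upd_mem_up[OF r(1) i(2)])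
    have x0: "x 0 = 2" using r(2) i(1) xi by simp
    have "0 < J x" unfolding J_def
    proof (rule Jpos[of i])
      show "i < n" by fact
      show "0 < x i" using xi by simp
      show "0 < h (x(i := x i - 1))" using r(3) xi by simp
      fix k assume k: "k < n" "0 < x k" "k \<noteq> i"
      have mem: "x(k := x k - 1) \<in> monoms n d" by (rule upd_mem_down[OF xm k(1,2)])
      show "0 \<le> h (x(k := x k - 1))"
      proof (cases "k = 0")
        case True
        have e: "x(k := x k - 1) = x(0 := 1)" using True x0 by simp
        show ?thesis unfolding e
        proof (rule l1)
          show "x(0 := 1) \<in> monoms n d" using mem e by simp
          show "(x(0 := 1)) 0 = 1" by simp
          show "x(0 := 1) \<notin> {p, q}" by fact
        qed
      next
        case False
        then have "(x(k := x k - 1)) 0 \<noteq> 1" using x0 by simp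
        then show ?thesis by (rule nonneg[OF mem])
      qed
    qed
    then show "x \<in> Z 2" using xm x0 by (simp add: Z_def)
  qed
  then have "card (A - B) \<le> card (Z 2)" by (rule card_mono[OF finZ])
  moreover have "card A - card B \<le> card (A - B)" using finA B_def by (intro diff_card_le_card_Diff) auto
  ultimately have cZ2: "n - 3 \<le> card (Z 2)" using cA cB by linarith
  have Z3: "Z 3 \<noteq> {}"
  proof -
    define x where "x = r(0 := Suc (r 0))"
    have xm: "x \<in> monoms n (Suc d)" unfolding x_def by (rule upd_mem_up[OF r(1) n0])
    have x0: "x 0 = 3" using r(2) by (simp add: x_def)
    have "0 < J x" unfolding J_def
    proof (rule Jpos[of 0])
      show "0 < n" by fact
      show "0 < x 0" using x0 by simp
      show "0 < h (x(0 := x 0 - 1))" using r(3) by (simp add: x_def)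
      fix k assume k: "k < n" "0 < x k" "k \<noteq> 0"
      have mem: "x(k := x k - 1) \<in> monoms n d" by (rule upd_mem_down[OF xm k(1,2)])
      have "(x(k := x k - 1)) 0 \<noteq> 1" using x0 k(3) by simp
      then show "0 \<le> h (x(k := x k - 1))" by (rule nonneg[OF mem])
    qed
    then have "x \<in> Z 3" using xm x0 by (simp add: Z_def)
    then show ?thesis by auto
  qed
  have c1: "1 \<le> card (Z 1)" using Z1 finZ[of 1] by (simp add: Suc_le_eq card_gt_0_iff)
  have c3: "1 \<le> card (Z 3)" using Z3 finZ[of 3] by (simp add: Suc_le_eq card_gt_0_iff)
  have "card (Z 0 \<union> Z 1 \<union> Z 2 \<union> Z 3) = card (Z 0) + card (Z 1) + card (Z 2) + card (Z 3)"
  proof -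
    have "card (Z 0 \<union> Z 1) = card (Z 0) + card (Z 1)"
      by (rule card_Un_disjoint[OF finZ finZ]) (auto simp: Z_def)
    moreover have "card (Z 0 \<union> Z 1 \<union> Z 2) = card (Z 0 \<union> Z 1) + card (Z 2)"
      by (rule card_Un_disjoint[OF finite_UnI[OF finZ finZ] finZ]) (auto simp: Z_def)
    moreover have "card (Z 0 \<union> Z 1 \<union> Z 2 \<union> Z 3) = card (Z 0 \<union> Z 1 \<union> Z 2) + card (Z 3)"
      by (rule card_Un_disjoint[OF finite_UnI[OF finite_UnI[OF finZ finZ] finZ] finZ]) (auto simp: Z_def)
    ultimately show ?thesis by simp
  qed
  moreover have "Z 0 \<union> Z 1 \<union> Z 2 \<union> Z 3 \<subseteq> {\<beta> \<in> monoms n (d+1). Jmat n d h \<beta> \<noteq> 0}"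
    by (auto simp: Z_def J_def)
  moreover have "finite {\<beta> \<in> monoms n (d+1). Jmat n d h \<beta> \<noteq> 0}"
    by (rule finite_subset[OF _ monoms_finite[of n "d+1"]]) auto
  ultimately have "card (Z 0) + card (Z 1) + card (Z 2) + card (Z 3) \<le> Rcount (monoms n (d+1)) (Jmat n d h)"
    unfolding Rcount_def by (metis card_mono)
  then show ?thesis using cZ0 c1 cZ2 c3 assms(1) by linarith
qed

end
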